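(* Let $\mathcal H$ be a well-structured preconditioner set and $M\in\mathcal S^d_{++}$. Then $\langle M,H\rangle=\langle P_{\mathcal H}(M)^2,H\rangle$ for every $H\in\mathcal H$, and $P_{\mathcal H}(M+\lambda I_d)^2=P_{\mathcal H}(M)^2+\lambda I_d$ for every $\lambda\ge0$.
   Context: $\mathcal S^d_+$ (resp. $\mathcal S^d_{++}$) denotes the set of real symmetric positive semidefinite (resp. positive definite) $d\times d$ matrices; $\langle A,B\rangle=\operatorname{Tr}(A^\top B)$. A set $\mathcal H\subseteq\mathcal S_+^d$ is a well-structured preconditioner set if $\mathcal H=\mathcal S_+^d\cap\mathcal K$ for some set $\mathcal K$ of real $d\times d$ matrices that is closed under scalar multiplication, matrix addition and matrix multiplication and contains the identity $I_d$. For $M\in\mathcal S^d_{++}$, $P_{\mathcal H}(M):=\arg\min_{H\in\mathcal H\cap\mathcal S^d_{++}}\langle M,H^{-1}\rangle+\operatorname{Tr}(H)$ (the minimizer exists and is unique). *)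

theory Defs
  imports "HOL-Analysis.Analysis"
begin

definition psd_mat :: "real^'n^'n \<Rightarrow> bool" where
  "psd_mat A \<longleftrightarrow> transpose A = A \<and> (\<forall>x. 0 \<le> x \<bullet> (A *v x))"

definition pd_mat :: "real^'n^'n \<Rightarrow> bool" where
  "pd_mat A \<longleftrightarrow> transpose A = A \<and> (\<forall>x. x \<noteq> 0 \<longrightarrow> 0 < x \<bullet> (A *v x))"

definition frob :: "real^'n^'n \<Rightarrow> real^'n^'n \<Rightarrow> real" where
  "frob A B = trace (transpose A ** B)"

definition well_structured :: "(real^'n^'n) set \<Rightarrow> bool" where
  "well_structured \<H> \<longleftrightarrow>
     (\<exists>K :: (real^'n^'n) set.
        (\<forall>c A. A \<in> K \<longrightarrow> c *\<^sub>R A \<in> K) \<and>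
        (\<forall>A\<in>K. \<forall>B\<in>K. A + B \<in> K) \<and>
        (\<forall>A\<in>K. \<forall>B\<in>K. A ** B \<in> K) \<and>
        mat 1 \<in> K \<and>
        \<H> = {A. psd_mat A} \<inter> K)"

definition precond_obj :: "real^'n^'n \<Rightarrow> real^'n^'n \<Rightarrow> real" where
  "precond_obj M H = frob M (matrix_inv H) + trace H"

definition P_H :: "(real^'n^'n) set \<Rightarrow> real^'n^'n \<Rightarrow> real^'n^'n" where
  "P_H \<H> M = (THE H. H \<in> \<H> \<and> pd_mat H \<and>
      (\<forall>G\<in>\<H>. pd_mat G \<longrightarrow> precond_obj M H \<le> precond_obj M G))"

end

theory Submission
  imports Defs
begin


lemma mm_add_r: "((A::real^'n^'m) + B) ** C = A ** C + B ** C"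
  by (simp add: matrix_matrix_mult_def vec_eq_iff sum.distrib distrib_right)
lemma mm_add_l: "(A::real^'n^'m) ** (B + C) = A ** B + A ** C"
  by (rule matrix_add_ldistrib)
lemma mm_diff_r: "((A::real^'n^'m) - B) ** C = A ** C - B ** C"
  by (simp add: matrix_matrix_mult_def vec_eq_iff sum_subtractf left_diff_distrib)
lemma mm_diff_l: "(A::real^'n^'m) ** (B - C) = A ** B - A ** C"
  by (simp add: matrix_matrix_mult_def vec_eq_iff sum_subtractf right_diff_distrib)
lemma mm_scale_l: "(c *\<^sub>R (A::real^'n^'m)) ** B = c *\<^sub>R (A ** B)"
  by (simp add: scalar_matrix_assoc)
lemma mm_scale_r: "(A::real^'n^'m) ** (c *\<^sub>R B) = c *\<^sub>R (A ** B)"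
  by (simp add: matrix_matrix_mult_def vec_eq_iff sum_distrib_left mult_ac)
lemma transpose_add: "transpose ((A::real^'n^'m) + B) = transpose A + transpose B"
  by (simp add: transpose_def vec_eq_iff)
lemma transpose_diff: "transpose ((A::real^'n^'m) - B) = transpose A - transpose B"
  by (simp add: transpose_def vec_eq_iff)
lemma trace_scale: "trace (c *\<^sub>R (A::real^'n^'n)) = c * trace A"
  by (simp add: trace_def sum_distrib_left)
lemma trace_transpose: "trace (transpose (A::real^'n^'n)) = trace A"
  by (simp add: trace_def transpose_def)
lemma mv_scale: "(c *\<^sub>R (A::real^'n^'m)) *v x = c *\<^sub>R (A *v x)"
  by (simp add: matrix_vector_mult_def vec_eq_iff sum_distrib_left mult_ac)
lemma mv_add: "((A::real^'n^'m) + B) *v x = A *v x + B *v x"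
  by (simp add: matrix_vector_mult_add_rdistrib)
lemma mv_diff: "((A::real^'n^'m) - B) *v x = A *v x - B *v x"
  by (simp add: matrix_vector_mult_def vec_eq_iff sum_subtractf left_diff_distrib)
lemma trace_mat1: "trace (mat 1 :: real^'n^'n) = real CARD('n)"
  by (simp add: trace_I)

lemma dot_transpose: "(x::real^'n) \<bullet> ((A::real^'n^'n) *v y) = (transpose A *v x) \<bullet> y"
  by (metis dot_lmul_matrix transpose_matrix_vector)
lemma sym_dot: "transpose (A::real^'n^'n) = A \<Longrightarrow> x \<bullet> (A *v y) = (A *v x) \<bullet> y"
  by (metis dot_transpose)

lemma pd_psd: "pd_mat A \<Longrightarrow> psd_mat A"
  unfolding psd_mat_def pd_mat_def by (metis inner_zero_left matrix_vector_mult_0_right order_refl less_imp_le)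
lemma psd_sym: "psd_mat A \<Longrightarrow> transpose A = A" unfolding psd_mat_def by simp
lemma pd_sym: "pd_mat A \<Longrightarrow> transpose A = A" unfolding pd_mat_def by simp

lemma pd_invertible: assumes "pd_mat (A::real^'n^'n)" shows "invertible A"
proof -
  have "\<forall>x. A *v x = 0 \<longrightarrow> x = 0"
    using assms unfolding pd_mat_def by (metis inner_zero_right less_irrefl)
  then show ?thesis using matrix_left_invertible_ker invertible_left_inverse by blast
qed

lemma inv_props: assumes "invertible (A::real^'n^'n)"
  shows "A ** matrix_inv A = mat 1" "matrix_inv A ** A = mat 1"
proof -
  have "\<exists>A'. A ** A' = mat 1 \<and> A' ** A = mat 1" using assms unfolding invertible_def by blast
  then have "A ** matrix_inv A = mat 1 \<and> matrix_inv A ** A = mat 1"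
    unfolding matrix_inv_def by (rule someI_ex)
  then show "A ** matrix_inv A = mat 1" "matrix_inv A ** A = mat 1" by auto
qed

lemma inv_unique: assumes "(A::real^'n^'n) ** B = mat 1" shows "matrix_inv A = B"
proof -
  have inv: "invertible A" using assms invertible_right_inverse by blast
  have "matrix_inv A = matrix_inv A ** (A ** B)" using assms by simp
  also have "\<dots> = B" by (simp add: matrix_mul_assoc inv_props[OF inv])
  finally show ?thesis .
qed

lemma inv_sym: assumes "transpose (A::real^'n^'n) = A" "invertible A"
  shows "transpose (matrix_inv A) = matrix_inv A"
proof -
  have "transpose (matrix_inv A) ** A = mat 1"
    by (metis assms inv_props(1) matrix_transpose_mul transpose_mat)
  then have "A ** transpose (matrix_inv A) = mat 1" using matrix_left_right_inverse by blast
  then show ?thesis using inv_unique by metis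
qed

lemma pd_inv: assumes "pd_mat (A::real^'n^'n)" shows "pd_mat (matrix_inv A)"
proof -
  have inv: "invertible A" by (rule pd_invertible[OF assms])
  have sA: "transpose A = A" using assms pd_sym by blast
  show ?thesis unfolding pd_mat_def
  proof (intro conjI allI impI)
    show "transpose (matrix_inv A) = matrix_inv A" by (rule inv_sym[OF sA inv])
    fix x :: "real^'n" assume x: "x \<noteq> 0"
    define y where "y = matrix_inv A *v x"
    have xy: "x = A *v y" unfolding y_def by (simp add: matrix_vector_mul_assoc inv_props[OF inv])
    have "y \<noteq> 0" using x xy by auto
    then have "0 < y \<bullet> (A *v y)" using assms unfolding pd_mat_def by blast
    also have "y \<bullet> (A *v y) = x \<bullet> (matrix_inv A *v x)"
      by (metis xy y_def inner_commute)
    finally show "0 < x \<bullet> (matrix_inv A *v x)" .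
  qed
qed



lemma quadtrace: "trace (transpose (Y::real^'n^'n) ** (H ** Y)) = (\<Sum>j\<in>UNIV. column j Y \<bullet> (H *v column j Y))"
  unfolding trace_def matrix_matrix_mult_def transpose_def column_def inner_vec_def matrix_vector_mult_def
  by (simp add: sum_distrib_left mult_ac)

definition outer :: "real^'n \<Rightarrow> real^'n^'n" where "outer v = (\<chi> i j. v$i * v$j)"

lemma trace_outer: "trace (outer v ** B) = v \<bullet> (B *v v)"
  unfolding trace_def matrix_matrix_mult_def outer_def inner_vec_def matrix_vector_mult_def
  apply (simp add: sum_distrib_left mult_ac)
  apply (subst sum.swap) apply (simp add: mult_ac)
  done

lemma quad_outer: "x \<bullet> (outer v *v x) = (v \<bullet> x)^2"
  unfolding outer_def inner_vec_def matrix_vector_mult_def power2_eq_square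
  by (simp add: sum_distrib_left sum_distrib_right mult_ac)

lemma transpose_outer: "transpose (outer v) = outer v"
  unfolding outer_def transpose_def by (simp add: vec_eq_iff mult.commute)

lemma entry_dot: "(A::real^'n^'n)$i$j = axis i 1 \<bullet> (A *v axis j 1)"
  by (simp add: matrix_vector_mult_basis inner_axis' column_def)

lemma psd_diag: "psd_mat A \<Longrightarrow> 0 \<le> A$i$i"
  unfolding psd_mat_def entry_dot by blast


lemma psd_cs: assumes "psd_mat (A::real^'n^'n)"
  shows "(x \<bullet> (A *v y))^2 \<le> (x \<bullet> (A *v x)) * (y \<bullet> (A *v y))"
proof -
  have sA: "transpose A = A" using assms psd_sym by blast
  have q: "0 \<le> (x + t *\<^sub>R y) \<bullet> (A *v (x + t *\<^sub>R y))" for t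
    using assms unfolding psd_mat_def by blast
  have e: "(x + t *\<^sub>R y) \<bullet> (A *v (x + t *\<^sub>R y)) = x \<bullet> (A *v x) + 2 * t * (x \<bullet> (A *v y)) + t^2 * (y \<bullet> (A *v y))" for t
  proof -
    have "y \<bullet> (A *v x) = x \<bullet> (A *v y)" using sym_dot[OF sA, of y x] by (simp add: inner_commute)
    then show ?thesis
      by (simp add: matrix_vector_right_distrib matrix_vector_mult_scaleR inner_add_left inner_add_right
          power2_eq_square algebra_simps)
  qed
  define a where "a = x \<bullet> (A *v x)"
  define b where "b = x \<bullet> (A *v y)"
  define c where "c = y \<bullet> (A *v y)"
  have q2: "0 \<le> a + 2 * t * b + t^2 * c" for t using q[of t] e[of t] unfolding a_def b_def c_def by simp
  have "b^2 \<le> a * c"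
  proof (cases "c = 0")
    case True
    then have l: "0 \<le> a + 2 * t * b" for t using q2[of t] by simp
    show ?thesis
    proof (rule ccontr)
      assume "\<not> ?thesis"
      then have "b \<noteq> 0" using True by simp
      have "0 \<le> a + 2 * (-(a+1)/(2*b)) * b" by (rule l)
      also have "\<dots> = -1" using \<open>b \<noteq> 0\<close> by (simp add: field_simps)
      finally show False by simp
    qed
  next
    case False
    have c0: "0 \<le> c" using q2[of 1] q2[of "-1"] q2[of 0] 
      using assms unfolding psd_mat_def c_def by blast
    then have "0 < c" using False by simp
    have "0 \<le> a + 2 * (-b/c) * b + (-b/c)^2 * c" by (rule q2)
    also have "\<dots> = (a * c - b^2) / c" using \<open>0 < c\<close> by (simp add: field_simps power2_eq_square)
    finally show ?thesis using \<open>0 < c\<close> by (simp add: divide_nonneg_pos le_divide_eq)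
  qed
  then show ?thesis unfolding a_def b_def c_def .
qed


lemma psd_entry_cs: "psd_mat A \<Longrightarrow> (A$i$j)^2 \<le> A$i$i * A$j$j"
  unfolding entry_dot by (rule psd_cs)

lemma psd_zero_diag: assumes "psd_mat A" "A$j$j = 0" shows "A$i$j = 0" "A$j$i = 0"
proof -
  have "(A$i$j)^2 \<le> 0" using psd_entry_cs[OF assms(1), of i j] assms(2) by simp
  then show "A$i$j = 0" by simp
  have "(A$j$i)^2 \<le> 0" using psd_entry_cs[OF assms(1), of j i] assms(2) by simp
  then show "A$j$i = 0" by simp
qed

lemma psd_outer: "psd_mat (outer v)"
  unfolding psd_mat_def by (simp add: transpose_outer quad_outer)


lemma psd_trace_nonneg_aux:
  "\<And>A::real^'n^'n. card {j. A$j$j \<noteq> 0} = k \<Longrightarrow> psd_mat A \<Longrightarrow> psd_mat B \<Longrightarrow> 0 \<le> trace (A ** B)"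
proof (induction k rule: less_induct)
  case (less k A)
  show ?case
  proof (cases "\<exists>i. A$i$i \<noteq> 0")
    case False
    have "A = 0" unfolding vec_eq_iff
      using psd_zero_diag(1)[OF less.prems(2)] False by auto
    then show ?thesis by (simp add: trace_def)
  next
    case True
    then obtain i where ai: "A$i$i \<noteq> 0" by blast
    then have ai0: "0 < A$i$i" using psd_diag[OF less.prems(2), of i] by simp
    define v where "v = (\<chi> j. A$j$i / sqrt (A$i$i))"
    define A' where "A' = A - outer v"
    have sA: "transpose A = A" using less.prems(2) psd_sym by blast
    have ov: "outer v *v x = (v \<bullet> x) *\<^sub>R v" for x
      unfolding outer_def matrix_vector_mult_def inner_vec_def
      by (simp add: vec_eq_iff sum_distrib_left mult_ac)
    have vx: "v \<bullet> x = (x \<bullet> (A *v axis i 1)) / sqrt (A$i$i)" for x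
      unfolding v_def inner_vec_def matrix_vector_mult_basis column_def
      by (simp add: sum_divide_distrib mult_ac)
    have psdA': "psd_mat A'"
      unfolding psd_mat_def
    proof (intro conjI allI)
      show "transpose A' = A'" unfolding A'_def by (simp add: transpose_diff sA transpose_outer)
      fix x :: "real^'n"
      have cs: "(x \<bullet> (A *v axis i 1))^2 \<le> (x \<bullet> (A *v x)) * A$i$i"
        using psd_cs[OF less.prems(2), of x "axis i 1"] by (simp add: entry_dot[symmetric])
      have "x \<bullet> (A' *v x) = x \<bullet> (A *v x) - (v \<bullet> x)^2"
        unfolding A'_def by (simp add: mv_diff inner_diff_right quad_outer)
      also have "(v \<bullet> x)^2 = (x \<bullet> (A *v axis i 1))^2 / A$i$i"
        using ai0 by (simp add: vx power_divide)
      finally show "0 \<le> x \<bullet> (A' *v x)"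
        using cs ai0 by (simp add: pos_divide_le_eq)
    qed
    have diag: "A'$j$j = A$j$j - (A$j$i)^2 / A$i$i" for j
    proof -
      have "A'$j$j = A$j$j - (A$j$i / sqrt (A$i$i))^2" unfolding A'_def outer_def v_def by (simp add: power2_eq_square)
      also have "\<dots> = A$j$j - (A$j$i)^2 / A$i$i" using ai0 by (simp add: power_divide)
      finally show ?thesis .
    qed
    have sub: "{j. A'$j$j \<noteq> 0} \<subset> {j. A$j$j \<noteq> 0}"
    proof
      show "{j. A'$j$j \<noteq> 0} \<subseteq> {j. A$j$j \<noteq> 0}"
        proof
        fix j assume "j \<in> {j. A'$j$j \<noteq> 0}"
        then have "A'$j$j \<noteq> 0" by simp
        show "j \<in> {j. A$j$j \<noteq> 0}"
        proof (rule ccontr)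
          assume "j \<notin> {j. A$j$j \<noteq> 0}"
          then have "A$j$j = 0" by simp
          then have "A$j$i = 0" using psd_zero_diag(2)[OF less.prems(2)] by blast
          then show False using diag[of j] \<open>A$j$j = 0\<close> \<open>A'$j$j \<noteq> 0\<close> by simp
        qed
      qed
      have "A'$i$i = 0" using diag[of i] ai0 by (simp add: power2_eq_square)
      then show "{j. A'$j$j \<noteq> 0} \<noteq> {j. A$j$j \<noteq> 0}" using ai by blast
    qed
    have "card {j. A'$j$j \<noteq> 0} < k" using psubset_card_mono[OF _ sub] less.prems(1) by simp
    then have "0 \<le> trace (A' ** B)" using less.IH psdA' less.prems(3) by blast
    moreover have "0 \<le> trace (outer v ** B)" using less.prems(3) unfolding trace_outer psd_mat_def by blast
    moreover have "A = A' + outer v" unfolding A'_def by simp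
    ultimately show ?thesis by (simp add: mm_add_r trace_add)
  qed
qed

lemma psd_trace_nonneg: "psd_mat (A::real^'n^'n) \<Longrightarrow> psd_mat B \<Longrightarrow> 0 \<le> trace (A ** B)"
  using psd_trace_nonneg_aux by blast



definition alg :: "(real^'n^'n) set \<Rightarrow> bool" where
  "alg K \<longleftrightarrow> (\<forall>c A. A \<in> K \<longrightarrow> c *\<^sub>R A \<in> K) \<and> (\<forall>A\<in>K. \<forall>B\<in>K. A + B \<in> K) \<and>
     (\<forall>A\<in>K. \<forall>B\<in>K. A ** B \<in> K) \<and> mat 1 \<in> K"

definition symK :: "(real^'n^'n) set \<Rightarrow> (real^'n^'n) set" where
  "symK K = {X \<in> K. transpose X = X}"

lemma alg_subspace: "alg K \<Longrightarrow> subspace K"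
  unfolding alg_def subspace_def by (metis scaleR_zero_left)

lemma alg_mult: "alg K \<Longrightarrow> A \<in> K \<Longrightarrow> B \<in> K \<Longrightarrow> A ** B \<in> K"
  unfolding alg_def by blast
lemma alg_one: "alg K \<Longrightarrow> mat 1 \<in> K" unfolding alg_def by blast
lemma alg_add: "alg K \<Longrightarrow> A \<in> K \<Longrightarrow> B \<in> K \<Longrightarrow> A + B \<in> K"
  unfolding alg_def by blast
lemma alg_scale: "alg K \<Longrightarrow> A \<in> K \<Longrightarrow> c *\<^sub>R A \<in> K"
  unfolding alg_def by blast
lemma alg_diff: "alg K \<Longrightarrow> A \<in> K \<Longrightarrow> B \<in> K \<Longrightarrow> A - B \<in> K"
  using alg_subspace subspace_diff by blast

lemma transpose_zero: "transpose (0::real^'n^'n) = 0"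
  by (simp add: transpose_def vec_eq_iff)

lemma symK_subspace: assumes "alg K" shows "subspace (symK K)"
  using alg_subspace[OF assms] unfolding subspace_def symK_def
  by (auto simp: transpose_add transpose_scalar transpose_zero)

lemma symK_closed: assumes "alg K" shows "closed (symK K)"
  by (rule closed_subspace[OF symK_subspace[OF assms]])

lemma alg_inv: fixes H :: "real^'n^'n" assumes K: "alg K" and H: "H \<in> K" and inv: "invertible H"
  shows "matrix_inv H \<in> K"
proof -
  define f where "f = (\<lambda>X::real^'n^'n. H ** X)"
  have lin: "linear f" unfolding f_def
    by (rule linearI) (simp_all add: mm_add_l mm_scale_r)
  have injf: "inj f" unfolding f_def inj_on_def
    by (metis matrix_mul_assoc inv_props(2)[OF inv] matrix_mul_lid)
  have sK: "subspace K" by (rule alg_subspace[OF K])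
  have img: "f ` K \<subseteq> K" unfolding f_def using alg_mult[OF K H] by blast
  have "dim (f ` K) = dim K" by (rule dim_image_eq[OF lin]) (use injf in \<open>auto simp: inj_on_def\<close>)
  then have "f ` K = K"
    using subspace_dim_equal[OF linear_subspace_image[OF lin sK] sK img] by simp
  then obtain X where X: "X \<in> K" "H ** X = mat 1" using alg_one[OF K] unfolding f_def by force
  then show ?thesis using inv_unique by metis
qed

lemma pd_lower: assumes "pd_mat (A::real^'n^'n)"
  shows "\<exists>m>0. \<forall>x. m * (x \<bullet> x) \<le> x \<bullet> (A *v x)"
proof -
  have cont: "continuous_on (sphere 0 1) (\<lambda>x::real^'n. x \<bullet> (A *v x))"
    by (intro continuous_intros linear_continuous_on linear_linear[THEN iffD1] matrix_vector_mul_linear)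
  have ne: "sphere (0::real^'n) 1 \<noteq> {}"
    proof -
    have "(axis undefined 1::real^'n) \<in> sphere 0 1" by simp
    then show ?thesis by blast
  qed
  obtain x0 where x0: "x0 \<in> sphere 0 1" "\<forall>y\<in>sphere 0 1. x0 \<bullet> (A *v x0) \<le> y \<bullet> (A *v y)"
    using continuous_attains_inf[OF compact_sphere ne cont] by blast
  define m where "m = x0 \<bullet> (A *v x0)"
  have "x0 \<noteq> 0" using x0(1) by auto
  then have m0: "0 < m" using assms unfolding pd_mat_def m_def by blast
  have "m * (x \<bullet> x) \<le> x \<bullet> (A *v x)" for x
  proof (cases "x = 0")
    case True then show ?thesis by simp
  next
    case False
    define u where "u = (1 / norm x) *\<^sub>R x"
    have u: "u \<in> sphere 0 1" unfolding u_def using False by simp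
    have xu: "x = norm x *\<^sub>R u" unfolding u_def using False by simp
    have "m \<le> u \<bullet> (A *v u)" using x0(2) u unfolding m_def by blast
    then have "norm x ^ 2 * m \<le> norm x ^ 2 * (u \<bullet> (A *v u))" by (simp add: mult_left_mono)
    also have "norm x ^ 2 * (u \<bullet> (A *v u)) = x \<bullet> (A *v x)"
      by (subst (2 3) xu) (simp add: matrix_vector_mult_scaleR power2_eq_square)
    finally show ?thesis by (simp add: power2_norm_eq_inner mult.commute)
  qed
  then show ?thesis using m0 by blast
qed

lemma quad_bound: "\<exists>B\<ge>0. \<forall>x. \<bar>x \<bullet> ((G::real^'n^'n) *v x)\<bar> \<le> B * (x \<bullet> x)"
proof -
  have "bounded_linear (\<lambda>x::real^'n. G *v x)"
    by (simp add: linear_linear[symmetric])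
  then obtain K where K: "\<forall>x. norm (G *v x) \<le> norm x * K" using bounded_linear.bounded by blast
  have "\<bar>x \<bullet> (G *v x)\<bar> \<le> max K 0 * (x \<bullet> x)" for x
  proof -
    have "\<bar>x \<bullet> (G *v x)\<bar> \<le> norm x * norm (G *v x)" by (rule Cauchy_Schwarz_ineq2)
    also have "\<dots> \<le> norm x * (norm x * K)" using K by (simp add: mult_left_mono)
    also have "\<dots> \<le> norm x * (norm x * max K 0)" by (simp add: mult_left_mono)
    also have "\<dots> = max K 0 * (x \<bullet> x)" by (simp add: power2_norm_eq_inner[symmetric] power2_eq_square)
    finally show ?thesis .
  qed
  then show ?thesis by (intro exI[of _ "max K 0"]) auto
qed

lemma psd_entry_bound: assumes "psd_mat (A::real^'n^'n)" shows "\<bar>A$i$j\<bar> \<le> trace A"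
proof -
  have d: "0 \<le> A$k$k" for k using psd_diag[OF assms] .
  have tr: "A$k$k \<le> trace A" for k
    unfolding trace_def using d by (intro member_le_sum) auto
  have "(A$i$j)^2 \<le> A$i$i * A$j$j" by (rule psd_entry_cs[OF assms])
  also have "\<dots> \<le> trace A * trace A" using d tr by (intro mult_mono) (auto intro: order_trans)
  finally have "(A$i$j)^2 \<le> (trace A)^2" by (simp add: power2_eq_square)
  moreover have "0 \<le> trace A" using d[of i] tr[of i] by linarith
  ultimately show ?thesis using abs_le_square_iff by (metis abs_of_nonneg)
qed

lemma norm_mat_bound: "norm (A::real^'n^'n) \<le> (\<Sum>i\<in>UNIV. \<Sum>j\<in>UNIV. \<bar>A$i$j\<bar>)"
proof -
  have "norm A \<le> (\<Sum>i\<in>UNIV. norm (A$i))" unfolding norm_vec_def by (rule L2_set_le_sum) simp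
  also have "\<dots> \<le> (\<Sum>i\<in>UNIV. \<Sum>j\<in>UNIV. \<bar>A$i$j\<bar>)"
    by (intro sum_mono) (simp add: norm_le_l1_cart)
  finally show ?thesis .
qed

lemma psd_norm_bound: assumes "psd_mat (A::real^'n^'n)" "trace A \<le> c"
  shows "norm A \<le> real CARD('n) * real CARD('n) * c"
proof -
  have "norm A \<le> (\<Sum>i\<in>UNIV. \<Sum>j\<in>UNIV. \<bar>A$i$j\<bar>)" by (rule norm_mat_bound)
  also have "\<dots> \<le> (\<Sum>i\<in>(UNIV::'n set). \<Sum>j\<in>(UNIV::'n set). c)"
    using psd_entry_bound[OF assms(1)] assms(2) by (intro sum_mono) (meson order_trans)
  also have "\<dots> = real CARD('n) * real CARD('n) * c" by simp
  finally show ?thesis .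
qed



lemma frob_sym: "transpose A = A \<Longrightarrow> frob A B = trace (A ** B)"
  unfolding frob_def by simp

lemma col_zero: "(\<forall>j. column j (Y::real^'n^'n) = 0) \<Longrightarrow> Y = 0"
  unfolding column_def by (simp add: vec_eq_iff)

lemma pd_quadtrace_nonneg: fixes Y :: "real^'n^'n" assumes "pd_mat (H::real^'n^'n)"
  shows "0 \<le> trace (transpose Y ** (H ** Y))"
    "trace (transpose Y ** (H ** Y)) = 0 \<Longrightarrow> Y = 0"
proof -
  have nn: "\<And>j. j \<in> UNIV \<Longrightarrow> 0 \<le> column j Y \<bullet> (H *v column j Y)"
    using pd_psd[OF assms] unfolding psd_mat_def by blast
  have qt: "trace (transpose Y ** (H ** Y)) = (\<Sum>j\<in>UNIV. column j Y \<bullet> (H *v column j Y))"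
    by (rule quadtrace)
  show "0 \<le> trace (transpose Y ** (H ** Y))" unfolding qt by (rule sum_nonneg) (rule nn)
  assume "trace (transpose Y ** (H ** Y)) = 0"
  then have "(\<Sum>j\<in>UNIV. column j Y \<bullet> (H *v column j Y)) = 0" unfolding qt .
  then have z: "\<forall>j\<in>UNIV. column j Y \<bullet> (H *v column j Y) = 0"
    using sum_nonneg_eq_0_iff[of UNIV "\<lambda>j. column j Y \<bullet> (H *v column j Y)", OF finite nn] by blast
  have "\<forall>j. column j Y = 0"
  proof (intro allI)
    fix j
    show "column j Y = 0"
    proof (rule ccontr)
      assume "column j Y \<noteq> 0"
      then have "0 < column j Y \<bullet> (H *v column j Y)" using assms unfolding pd_mat_def by blast
      then show False using z by simp
    qed
  qed
  then show "Y = 0" by (rule col_zero)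
qed

lemma inv_symK: assumes "alg K" "H \<in> K" "pd_mat H" shows "matrix_inv H \<in> symK K"
  unfolding symK_def using alg_inv[OF assms(1,2) pd_invertible[OF assms(3)]]
    inv_sym[OF pd_sym[OF assms(3)] pd_invertible[OF assms(3)]] by simp

lemma opt_core:
  fixes M P H :: "real^'n^'n"
  assumes K: "alg K" and M: "pd_mat M" and P: "P \<in> K" "pd_mat P"
    and stat: "\<forall>X\<in>symK K. trace (M ** X) = trace (P ** P ** X)"
    and H: "H \<in> K" "pd_mat H"
  shows "precond_obj M H - precond_obj M P = trace (transpose (matrix_inv H ** P - mat 1) ** (H ** (matrix_inv H ** P - mat 1)))"
proof -
  define Hi where "Hi = matrix_inv H"
  define Pi where "Pi = matrix_inv P"
  have invH: "invertible H" using pd_invertible H(2) by blast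
  have invP: "invertible P" using pd_invertible P(2) by blast
  have sM: "transpose M = M" using pd_sym M by blast
  have sP: "transpose P = P" using pd_sym P(2) by blast
  have sHi: "transpose Hi = Hi" unfolding Hi_def using inv_sym[OF pd_sym[OF H(2)] invH] .
  have HHi: "H ** Hi = mat 1" unfolding Hi_def by (rule inv_props(1)[OF invH])
  have PPi: "P ** Pi = mat 1" unfolding Pi_def by (rule inv_props(1)[OF invP])
  have fH: "precond_obj M H = trace (P ** P ** Hi) + trace H"
    unfolding precond_obj_def frob_sym[OF sM] Hi_def
    using stat inv_symK[OF K H] by simp
  have fP: "precond_obj M P = trace (P ** P ** Pi) + trace P"
    unfolding precond_obj_def frob_sym[OF sM] Pi_def
    using stat inv_symK[OF K P] by simp
  have PPPi: "P ** P ** Pi = P" by (metis PPi matrix_mul_assoc matrix_mul_rid)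
  define Y where "Y = Hi ** P - mat 1"
  have tY: "transpose Y = P ** Hi - mat 1"
    unfolding Y_def by (simp add: transpose_diff matrix_transpose_mul sP sHi)
  have HY: "H ** Y = P - H"
    unfolding Y_def by (simp add: mm_diff_l matrix_mul_assoc HHi)
  have "transpose Y ** (H ** Y) = P ** Hi ** P - P ** Hi ** H - P + H"
    unfolding tY HY by (simp add: mm_diff_l mm_diff_r algebra_simps)
  also have "P ** Hi ** H = P"
    by (metis HHi Hi_def invH inv_props(2) matrix_mul_assoc matrix_mul_rid)
  finally have e: "transpose Y ** (H ** Y) = P ** Hi ** P - P - P + H" .
  have tr: "trace (P ** Hi ** P) = trace (P ** P ** Hi)"
    by (metis matrix_mul_assoc trace_mul_sym)
  have "trace (P ** Hi ** P - P - P + H) = trace (P ** Hi ** P) - trace P - trace P + trace H"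
    by (simp only: trace_add trace_sub)
  then show ?thesis
    unfolding Y_def[symmetric] Hi_def[symmetric] e fH fP PPPi tr by simp
qed

lemma opt:
  fixes M P H :: "real^'n^'n"
  assumes K: "alg K" and M: "pd_mat M" and P: "P \<in> K" "pd_mat P"
    and stat: "\<forall>X\<in>symK K. trace (M ** X) = trace (P ** P ** X)"
    and H: "H \<in> K" "pd_mat H"
  shows "precond_obj M P \<le> precond_obj M H"
    "precond_obj M H \<le> precond_obj M P \<Longrightarrow> H = P"
proof -
  note e = opt_core[OF assms]
  show "precond_obj M P \<le> precond_obj M H"
    using pd_quadtrace_nonneg(1)[OF H(2), of "matrix_inv H ** P - mat 1"] e by simp
  assume "precond_obj M H \<le> precond_obj M P"
  then have "trace (transpose (matrix_inv H ** P - mat 1) ** (H ** (matrix_inv H ** P - mat 1))) = 0"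
    using pd_quadtrace_nonneg(1)[OF H(2), of "matrix_inv H ** P - mat 1"] e by simp
  then have "matrix_inv H ** P - mat 1 = 0" by (rule pd_quadtrace_nonneg(2)[OF H(2)])
  then have "matrix_inv H ** P = mat 1" by simp
  then have "H ** (matrix_inv H ** P) = H" by simp
  then show "H = P"
    using inv_props(1)[OF pd_invertible[OF H(2)]] by (simp add: matrix_mul_assoc)
qed

lemma P_H_eq:
  fixes M P :: "real^'n^'n"
  assumes K: "alg K" and HK: "\<H> = {A. psd_mat A} \<inter> K" and M: "pd_mat M" and P: "P \<in> K" "pd_mat P"
    and stat: "\<forall>X\<in>symK K. trace (M ** X) = trace (P ** P ** X)"
  shows "P_H \<H> M = P"
  unfolding P_H_def
proof (rule the_equality)
  show "P \<in> \<H> \<and> pd_mat P \<and> (\<forall>G\<in>\<H>. pd_mat G \<longrightarrow> precond_obj M P \<le> precond_obj M G)"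
    using opt(1)[OF K M P stat] P pd_psd HK by blast
  fix H assume "H \<in> \<H> \<and> pd_mat H \<and> (\<forall>G\<in>\<H>. pd_mat G \<longrightarrow> precond_obj M H \<le> precond_obj M G)"
  then show "H = P" using opt(2)[OF K M P stat] P pd_psd HK by blast
qed



lemma lin_quad:
  fixes D K1 \<delta> :: real
  assumes "\<delta> > 0" "K1 \<ge> 0" "\<forall>t. \<bar>t\<bar> \<le> \<delta> \<longrightarrow> 0 \<le> t * D + t^2 * K1"
  shows "D = 0"
proof (rule ccontr)
  assume nz: "D \<noteq> 0"
  define s where "s = min \<delta> (\<bar>D\<bar> / (K1 + 1))"
  have s0: "0 < s" unfolding s_def using assms nz by simp
  have sle: "s \<le> \<delta>" "s \<le> \<bar>D\<bar> / (K1 + 1)" unfolding s_def by auto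
  have key: "\<bar>D\<bar> \<le> s * K1"
  proof (cases "D > 0")
    case True
    have "0 \<le> (-s) * D + (-s)^2 * K1" using assms(3)[rule_format, of "-s"] sle s0 by simp
    then have "s * D \<le> s * (s * K1)" by (simp add: power2_eq_square algebra_simps)
    then have "D \<le> s * K1" using mult_left_le_imp_le s0 by blast
    then show ?thesis using True by simp
  next
    case False
    have "0 \<le> s * D + s^2 * K1" using assms(3)[rule_format, of "s"] sle s0 by simp
    then have "s * (-D) \<le> s * (s * K1)" by (simp add: power2_eq_square algebra_simps)
    then have "-D \<le> s * K1" using mult_left_le_imp_le s0 by blast
    then show ?thesis using False by simp
  qed
  also have "s * K1 \<le> \<bar>D\<bar> / (K1 + 1) * K1" using mult_right_mono[OF sle(2) assms(2)] by simp
  also have "\<dots> < \<bar>D\<bar>" using nz assms(2) by (simp add: field_simps)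
  finally show False by simp
qed

lemma psd_congr: fixes B :: "real^'n^'n" assumes "psd_mat (M::real^'n^'n)" shows "psd_mat (transpose B ** M ** B)"
  unfolding psd_mat_def
proof (intro conjI allI)
  have sM: "transpose M = M" using psd_sym[OF assms] .
  show "transpose (transpose B ** M ** B) = transpose B ** M ** B"
    by (simp add: matrix_transpose_mul sM matrix_mul_assoc)
  fix x :: "real^'n"
  have "x \<bullet> ((transpose B ** M ** B) *v x) = (B *v x) \<bullet> (M *v (B *v x))"
  proof -
    have "(transpose B ** M ** B) *v x = transpose B *v (M *v (B *v x))"
      by (simp only: matrix_vector_mul_assoc matrix_mul_assoc)
    then show ?thesis by (simp only: dot_transpose transpose_transpose)
  qed
  then show "0 \<le> x \<bullet> ((transpose B ** M ** B) *v x)" using assms unfolding psd_mat_def by simp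
qed

lemma inv_upper:
  fixes H :: "real^'n^'n"
  assumes "pd_mat H" "c > 0" "\<forall>x. c * (x \<bullet> x) \<le> x \<bullet> (H *v x)"
  shows "psd_mat ((1/c) *\<^sub>R mat 1 - matrix_inv H)"
  unfolding psd_mat_def
proof (intro conjI allI)
  have invH: "invertible H" using pd_invertible[OF assms(1)] .
  have sHi: "transpose (matrix_inv H) = matrix_inv H" using inv_sym[OF pd_sym[OF assms(1)] invH] .
  show "transpose ((1/c) *\<^sub>R mat 1 - matrix_inv H) = (1/c) *\<^sub>R mat 1 - matrix_inv H"
    by (simp add: transpose_diff transpose_scalar sHi)
  fix y :: "real^'n"
  define z where "z = matrix_inv H *v y"
  have yz: "y = H *v z" unfolding z_def by (simp add: matrix_vector_mul_assoc inv_props(1)[OF invH])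
  define q where "q = y \<bullet> (matrix_inv H *v y)"
  have q1: "q = z \<bullet> (H *v z)" unfolding q_def z_def[symmetric] yz by (simp add: inner_commute matrix_vector_mul_assoc inv_props(2)[OF invH])
  have q2: "q = z \<bullet> y" unfolding q_def z_def[symmetric] by (simp add: inner_commute)
  have cz: "c * (z \<bullet> z) \<le> q" using assms(3) q1 by simp
  have "q^2 \<le> (z \<bullet> z) * (y \<bullet> y)" unfolding q2 by (rule Cauchy_Schwarz_ineq)
  also have "\<dots> \<le> (q / c) * (y \<bullet> y)"
    using cz assms(2) by (intro mult_right_mono) (simp_all add: field_simps)
  finally have qq: "q * q \<le> q * ((y \<bullet> y) / c)" by (simp add: power2_eq_square)
  have "q \<le> (y \<bullet> y) / c"
  proof (cases "q > 0")
    case True then show ?thesis using mult_left_le_imp_le[OF qq True] by simp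
  next
    case False then show ?thesis using assms(2) by (smt (verit) divide_nonneg_pos inner_ge_zero)
  qed
  moreover have "y \<bullet> (((1/c) *\<^sub>R mat 1 - matrix_inv H) *v y) = (y \<bullet> y) / c - q"
    unfolding q_def by (simp add: mv_diff mv_scale inner_diff_right)
  ultimately show "0 \<le> y \<bullet> (((1/c) *\<^sub>R mat 1 - matrix_inv H) *v y)" by simp
qed



lemma resolvent:
  fixes P G H :: "real^'n^'n"
  assumes invP: "invertible P" and invH: "invertible H" and H: "H = P + t *\<^sub>R G"
  shows "matrix_inv H = matrix_inv P - t *\<^sub>R (matrix_inv P ** G ** matrix_inv P)
           + (t^2) *\<^sub>R (matrix_inv P ** G ** matrix_inv H ** G ** matrix_inv P)"
proof -
  define Pi where "Pi = matrix_inv P"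
  define Hi where "Hi = matrix_inv H"
  have PPi: "P ** Pi = mat 1" "Pi ** P = mat 1" unfolding Pi_def using inv_props[OF invP] by auto
  have HHi: "H ** Hi = mat 1" "Hi ** H = mat 1" unfolding Hi_def using inv_props[OF invH] by auto
  have PiH: "Pi ** H = mat 1 + t *\<^sub>R (Pi ** G)" unfolding H by (simp add: mm_add_l mm_scale_r PPi)
  have HPi: "H ** Pi = mat 1 + t *\<^sub>R (G ** Pi)" unfolding H by (simp add: mm_add_r mm_scale_l PPi)
  have "Pi = (Pi ** H) ** Hi" by (simp add: matrix_mul_assoc[symmetric] HHi)
  also have "\<dots> = Hi + t *\<^sub>R (Pi ** G ** Hi)" unfolding PiH by (simp add: mm_add_r mm_scale_l)
  finally have e2: "Hi = Pi - t *\<^sub>R (Pi ** G ** Hi)" by (simp add: algebra_simps)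
  have "Pi = Hi ** (H ** Pi)" by (simp add: matrix_mul_assoc HHi)
  also have "\<dots> = Hi + t *\<^sub>R (Hi ** G ** Pi)" unfolding HPi by (simp add: mm_add_l mm_scale_r matrix_mul_assoc)
  finally have e3: "Hi = Pi - t *\<^sub>R (Hi ** G ** Pi)" by (simp add: algebra_simps)
  have "Pi ** G ** Hi = Pi ** G ** (Pi - t *\<^sub>R (Hi ** G ** Pi))" using e3 by simp
  also have "\<dots> = Pi ** G ** Pi - t *\<^sub>R (Pi ** G ** Hi ** G ** Pi)"
    by (simp add: mm_diff_l mm_scale_r matrix_mul_assoc)
  finally have "Hi = Pi - t *\<^sub>R (Pi ** G ** Pi - t *\<^sub>R (Pi ** G ** Hi ** G ** Pi))" using e2 by simp
  then show ?thesis unfolding Hi_def[symmetric] Pi_def[symmetric]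
    by (simp add: algebra_simps power2_eq_square)
qed



lemma stat_dir:
  fixes M P G :: "real^'n^'n"
  assumes K: "alg K" and M: "pd_mat M" and P: "P \<in> K" "pd_mat P"
    and min: "\<forall>H. H \<in> K \<longrightarrow> pd_mat H \<longrightarrow> precond_obj M P \<le> precond_obj M H"
    and G: "G \<in> symK K"
  shows "trace G = trace (M ** matrix_inv P ** G ** matrix_inv P)"
proof -
  define Pi where "Pi = matrix_inv P"
  have invP: "invertible P" using pd_invertible[OF P(2)] .
  have sM: "transpose M = M" using pd_sym[OF M] .
  have sPi: "transpose Pi = Pi" unfolding Pi_def using inv_sym[OF pd_sym[OF P(2)] invP] .
  have GK: "G \<in> K" and sG: "transpose G = G" using G unfolding symK_def by auto
  obtain c0 where c0: "c0 > 0" "\<forall>x. c0 * (x \<bullet> x) \<le> x \<bullet> (P *v x)" using pd_lower[OF P(2)] by blast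
  obtain B where B: "B \<ge> 0" "\<forall>x. \<bar>x \<bullet> (G *v x)\<bar> \<le> B * (x \<bullet> x)" using quad_bound by blast
  define c where "c = c0 / 2"
  define \<delta> where "\<delta> = c0 / (2 * (B + 1))"
  have c: "c > 0" unfolding c_def using c0 by simp
  have \<delta>: "\<delta> > 0" unfolding \<delta>_def using c0 B by simp
  have \<delta>B: "\<delta> * B \<le> c"
  proof -
    have "\<delta> * B = c * (B / (B + 1))" unfolding \<delta>_def c_def using B by (simp add: field_simps)
    also have "\<dots> \<le> c * 1" using c B by (intro mult_left_mono) auto
    finally show ?thesis by simp
  qed
  define A where "A = transpose (Pi ** G) ** M ** (Pi ** G)"
  have psdA: "psd_mat A" unfolding A_def by (rule psd_congr[OF pd_psd[OF M]])
  have trA: "0 \<le> trace A" using psd_trace_nonneg[OF psdA, of "mat 1"] pd_psd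
    by (simp add: psd_mat_def)
  define Dd where "Dd = trace G - trace (M ** Pi ** G ** Pi)"
  define K1 where "K1 = trace A / c"
  have K1: "K1 \<ge> 0" unfolding K1_def using trA c by simp
  have main: "0 \<le> t * Dd + t^2 * K1" if t: "\<bar>t\<bar> \<le> \<delta>" for t
  proof -
    define H where "H = P + t *\<^sub>R G"
    have HK: "H \<in> K" unfolding H_def using alg_add[OF K P(1) alg_scale[OF K GK]] .
    have Hlow: "c * (x \<bullet> x) \<le> x \<bullet> (H *v x)" for x
    proof -
      have e: "x \<bullet> (H *v x) = x \<bullet> (P *v x) + t * (x \<bullet> (G *v x))"
        unfolding H_def by (simp add: mv_add mv_scale inner_add_right)
      have "\<bar>t * (x \<bullet> (G *v x))\<bar> \<le> \<delta> * (B * (x \<bullet> x))"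
        unfolding abs_mult using t B(2) by (intro mult_mono) auto
      also have "\<dots> \<le> c * (x \<bullet> x)" using \<delta>B by (simp add: mult.assoc[symmetric] mult_right_mono)
      finally have "- (c * (x \<bullet> x)) \<le> t * (x \<bullet> (G *v x))" by linarith
      moreover have "c0 * (x \<bullet> x) = 2 * (c * (x \<bullet> x))" unfolding c_def by simp
      ultimately show ?thesis using c0(2)[rule_format, of x] e by linarith
    qed
    have Hpd: "pd_mat H" unfolding pd_mat_def
    proof (intro conjI allI impI)
      show "transpose H = H" unfolding H_def
        by (simp add: transpose_add transpose_scalar sG pd_sym[OF P(2)])
      fix x :: "real^'n" assume "x \<noteq> 0"
      then have "0 < x \<bullet> x" by simp
      then show "0 < x \<bullet> (H *v x)" using Hlow[of x] c by (smt (verit) mult_pos_pos)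
    qed
    have invH: "invertible H" using pd_invertible[OF Hpd] .
    define Hi where "Hi = matrix_inv H"
    have res: "Hi = Pi - t *\<^sub>R (Pi ** G ** Pi) + (t^2) *\<^sub>R (Pi ** G ** Hi ** G ** Pi)"
      unfolding Hi_def Pi_def by (rule resolvent[OF invP invH H_def])
    have trAHi: "trace (M ** (Pi ** G ** Hi ** G ** Pi)) = trace (A ** Hi)"
    proof -
      have A': "A = G ** Pi ** M ** Pi ** G"
        unfolding A_def by (simp add: matrix_transpose_mul sG sPi matrix_mul_assoc)
      have "trace (M ** (Pi ** G ** Hi ** G ** Pi)) = trace ((M ** Pi ** G ** Hi) ** (G ** Pi))"
        by (simp add: matrix_mul_assoc)
      also have "\<dots> = trace ((G ** Pi) ** (M ** Pi ** G ** Hi))" by (rule trace_mul_sym)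
      also have "\<dots> = trace (A ** Hi)" unfolding A' by (simp add: matrix_mul_assoc)
      finally show ?thesis .
    qed
    have trMHi: "trace (M ** Hi) = trace (M ** Pi) - t * trace (M ** Pi ** G ** Pi) + t^2 * trace (A ** Hi)"
    proof -
      have "M ** Hi = M ** Pi - t *\<^sub>R (M ** (Pi ** G ** Pi)) + (t^2) *\<^sub>R (M ** (Pi ** G ** Hi ** G ** Pi))"
        by (subst res) (simp add: mm_add_l mm_diff_l mm_scale_r)
      then have "trace (M ** Hi) = trace (M ** Pi) - t * trace (M ** (Pi ** G ** Pi)) + t^2 * trace (M ** (Pi ** G ** Hi ** G ** Pi))"
        by (simp add: trace_add trace_sub trace_scale)
      then show ?thesis unfolding trAHi by (simp add: matrix_mul_assoc)
    qed
    have trH: "trace H = trace P + t * trace G" unfolding H_def by (simp add: trace_add trace_scale)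
    have objH: "precond_obj M H = trace (M ** Hi) + trace P + t * trace G"
      unfolding precond_obj_def frob_sym[OF sM] Hi_def[symmetric] trH by simp
    have objP: "precond_obj M P = trace (M ** Pi) + trace P"
      unfolding precond_obj_def frob_sym[OF sM] Pi_def by simp
    have "precond_obj M P \<le> precond_obj M H" using min HK Hpd by blast
    then have q: "0 \<le> t * Dd + t^2 * trace (A ** Hi)"
      unfolding objH objP trMHi Dd_def by (simp add: algebra_simps)
    have "psd_mat ((1/c) *\<^sub>R mat 1 - Hi)" unfolding Hi_def using inv_upper[OF Hpd c] Hlow by blast
    then have "0 \<le> trace (A ** ((1/c) *\<^sub>R mat 1 - Hi))" by (rule psd_trace_nonneg[OF psdA])
    then have "trace (A ** Hi) \<le> K1" unfolding K1_def
      by (simp add: mm_diff_l mm_scale_r trace_sub trace_scale)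
    then have "t^2 * trace (A ** Hi) \<le> t^2 * K1" by (simp add: mult_left_mono)
    then show ?thesis using q by linarith
  qed
  have "Dd = 0" by (rule lin_quad[OF \<delta> K1]) (use main in blast)
  then show ?thesis unfolding Dd_def Pi_def by simp
qed

lemma stat:
  fixes M P :: "real^'n^'n"
  assumes K: "alg K" and M: "pd_mat M" and P: "P \<in> K" "pd_mat P"
    and min: "\<forall>H. H \<in> K \<longrightarrow> pd_mat H \<longrightarrow> precond_obj M P \<le> precond_obj M H"
  shows "\<forall>X\<in>symK K. trace (M ** X) = trace (P ** P ** X)"
proof
  fix X assume X: "X \<in> symK K"
  define Pi where "Pi = matrix_inv P"
  have invP: "invertible P" using pd_invertible[OF P(2)] .
  have PPi: "P ** Pi = mat 1" "Pi ** P = mat 1" unfolding Pi_def using inv_props[OF invP] by auto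
  have sP: "transpose P = P" using pd_sym[OF P(2)] .
  have XK: "X \<in> K" and sX: "transpose X = X" using X unfolding symK_def by auto
  have G: "P ** X ** P \<in> symK K" unfolding symK_def
    using alg_mult[OF K alg_mult[OF K P(1) XK] P(1)]
    by (simp add: matrix_transpose_mul sP sX matrix_mul_assoc)
  have "trace (P ** X ** P) = trace (M ** Pi ** (P ** X ** P) ** Pi)"
    unfolding Pi_def by (rule stat_dir[OF K M P min G])
  also have "M ** Pi ** (P ** X ** P) ** Pi = M ** X"
  proof -
    have "M ** Pi ** (P ** X ** P) ** Pi = M ** (Pi ** P) ** X ** (P ** Pi)"
      by (simp add: matrix_mul_assoc)
    then show ?thesis by (simp add: PPi)
  qed
  finally have "trace (M ** X) = trace (P ** X ** P)" by simp
  also have "\<dots> = trace (P ** (P ** X))" by (metis matrix_mul_assoc trace_mul_sym)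
  finally show "trace (M ** X) = trace (P ** P ** X)" by (simp add: matrix_mul_assoc)
qed



lemma cont_mm: "continuous_on S (\<lambda>p::(real^'n^'n) \<times> (real^'n^'n). fst p ** snd p)"
  unfolding matrix_matrix_mult_def
  by (intro continuous_on_vec_lambda continuous_intros)

lemma cont_trace: "continuous_on S (\<lambda>A::real^'n^'n. trace A)"
  unfolding trace_def by (intro continuous_intros)

lemma cont_transpose: "continuous_on S (\<lambda>A::real^'n^'n. transpose A)"
  unfolding transpose_def by (intro continuous_on_vec_lambda continuous_intros)

lemma cont_quad: "continuous_on S (\<lambda>A::real^'n^'n. x \<bullet> (A *v x))"
  unfolding matrix_vector_mult_def inner_vec_def by (intro continuous_intros)

lemma closed_psd: "closed {A::real^'n^'n. psd_mat A}"
proof -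
  have "{A::real^'n^'n. psd_mat A} = {A. transpose A = A} \<inter> (\<Inter>x. {A. 0 \<le> x \<bullet> (A *v x)})"
    unfolding psd_mat_def by auto
  also have "closed \<dots>"
    by (intro closed_Int closed_INT ballI allI closed_Collect_eq closed_Collect_le cont_transpose cont_quad continuous_on_id continuous_on_const)
  finally show ?thesis .
qed

lemma psd_inv_pd: assumes "psd_mat (A::real^'n^'n)" "invertible A" shows "pd_mat A"
  unfolding pd_mat_def
proof (intro conjI allI impI)
  show "transpose A = A" using psd_sym[OF assms(1)] .
  fix x :: "real^'n" assume x: "x \<noteq> 0"
  have nn: "0 \<le> x \<bullet> (A *v x)" using assms(1) unfolding psd_mat_def by blast
  show "0 < x \<bullet> (A *v x)"
  proof (rule ccontr)
    assume "\<not> 0 < x \<bullet> (A *v x)"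
    then have z: "x \<bullet> (A *v x) = 0" using nn by simp
    have "((A *v x) \<bullet> (A *v x))^2 \<le> ((A *v x) \<bullet> (A *v (A *v x))) * (x \<bullet> (A *v x))"
      by (rule psd_cs[OF assms(1)])
    then have "((A *v x) \<bullet> (A *v x))^2 \<le> 0" by (simp only: z mult_zero_right)
    then have "A *v x = 0" by simp
    then have "A *v x = A *v 0" by simp
    then have "x = 0" using inj_matrix_vector_mult[OF assms(2)] unfolding inj_def by blast
    then show False using x by simp
  qed
qed

lemma inv_mat1: "matrix_inv (mat 1 :: real^'n^'n) = mat 1"
  by (rule inv_unique) simp

lemma pd_mat1: "pd_mat (mat 1 :: real^'n^'n)"
  unfolding pd_mat_def by simp

lemma trace_M_lower:
  fixes M W :: "real^'n^'n"
  assumes "m > 0" "\<forall>x. m * (x \<bullet> x) \<le> x \<bullet> (M *v x)" "transpose M = M" "psd_mat W"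
  shows "m * trace W \<le> trace (M ** W)"
proof -
  have "psd_mat (M - m *\<^sub>R mat 1)" unfolding psd_mat_def
    using assms(2,3) by (simp add: transpose_diff transpose_scalar mv_diff mv_scale inner_diff_right)
  then have "0 \<le> trace ((M - m *\<^sub>R mat 1) ** W)" using psd_trace_nonneg assms(4) by blast
  then show ?thesis by (simp add: mm_diff_r mm_scale_l trace_sub trace_scale)
qed

lemma exists_min:
  fixes M :: "real^'n^'n"
  assumes K: "alg K" and M: "pd_mat M"
  shows "\<exists>P. P \<in> K \<and> pd_mat P \<and> (\<forall>H. H \<in> K \<longrightarrow> pd_mat H \<longrightarrow> precond_obj M P \<le> precond_obj M H)"
proof -
  have sM: "transpose M = M" using pd_sym[OF M] .
  obtain m where m: "m > 0" "\<forall>x. m * (x \<bullet> x) \<le> x \<bullet> (M *v x)" using pd_lower[OF M] by blast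
  note tML = trace_M_lower[OF m sM]
  define c0 where "c0 = trace M + real CARD('n)"
  have trM: "0 \<le> trace M" using psd_trace_nonneg[OF pd_psd[OF M] pd_psd[OF pd_mat1]] by simp
  define C1 where "C1 = {H. H \<in> symK K \<and> psd_mat H \<and> trace H \<le> c0}"
  define C2 where "C2 = {W::real^'n^'n. psd_mat W \<and> trace W \<le> c0 / m}"
  define C where "C = (C1 \<times> C2) \<inter> {p. fst p ** snd p = mat 1} \<inter> {p. trace (M ** snd p) \<le> c0}"
  define g where "g = (\<lambda>p::(real^'n^'n) \<times> (real^'n^'n). trace (fst p) + trace (M ** snd p))"
  have cl1: "closed C1"
  proof -
    have "C1 = symK K \<inter> {A. psd_mat A} \<inter> {H. trace H \<le> c0}" unfolding C1_def by auto
    also have "closed \<dots>"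
      by (intro closed_Int symK_closed[OF K] closed_psd closed_Collect_le cont_trace continuous_on_const)
    finally show ?thesis .
  qed
  have bd1: "bounded C1" unfolding bounded_iff C1_def
    using psd_norm_bound by (intro exI[of _ "real CARD('n) * real CARD('n) * c0"]) auto
  have cl2: "closed C2"
  proof -
    have "C2 = {A. psd_mat A} \<inter> {H. trace H \<le> c0 / m}" unfolding C2_def by auto
    also have "closed \<dots>"
      by (intro closed_Int closed_psd closed_Collect_le cont_trace continuous_on_const)
    finally show ?thesis .
  qed
  have bd2: "bounded C2" unfolding bounded_iff
  proof (intro exI ballI)
    fix W assume "W \<in> C2"
    then show "norm W \<le> real CARD('n) * real CARD('n) * (c0 / m)"
      using psd_norm_bound[of W "c0 / m"] unfolding C2_def by blast
  qed
  have cpt: "compact C"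
  proof -
    have "compact (C1 \<times> C2)" using compact_Times cl1 bd1 cl2 bd2 compact_eq_bounded_closed by blast
    moreover have "closed {p::(real^'n^'n) \<times> (real^'n^'n). fst p ** snd p = mat 1}"
      by (intro closed_Collect_eq cont_mm continuous_on_const)
    moreover have "closed {p::(real^'n^'n) \<times> (real^'n^'n). trace (M ** snd p) \<le> c0}"
      unfolding trace_def matrix_matrix_mult_def
      by (intro closed_Collect_le continuous_intros)
    ultimately show ?thesis unfolding C_def
      using closed_Int_compact compact_Int_closed by blast
  qed
  have WC2: "W \<in> C2" if "psd_mat W" "trace (M ** W) \<le> c0" for W
  proof -
    have "m * trace W \<le> c0" using tML[OF that(1)] that(2) by simp
    then have "trace W \<le> c0 / m" using m(1) by (simp add: field_simps)
    then show ?thesis unfolding C2_def using that by simp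
  qed
  have IC: "(mat 1, mat 1) \<in> C"
  proof -
    have "mat 1 \<in> symK K" unfolding symK_def using alg_one[OF K] by simp
    then have "mat 1 \<in> C1" unfolding C1_def c0_def using pd_psd[OF pd_mat1] trM by (simp add: trace_mat1)
    moreover have "mat 1 \<in> C2" by (rule WC2[OF pd_psd[OF pd_mat1]]) (simp add: c0_def)
    ultimately show ?thesis unfolding C_def c0_def by simp
  qed
  have gc: "continuous_on C g" unfolding g_def trace_def matrix_matrix_mult_def
    by (intro continuous_intros)
  obtain p0 where p0: "p0 \<in> C" "\<forall>q\<in>C. g p0 \<le> g q"
    using continuous_attains_inf[OF cpt _ gc] IC by blast
  define P where "P = fst p0"
  define W0 where "W0 = snd p0"
  have PC1: "P \<in> C1" and W0C2: "W0 \<in> C2" and PW: "P ** W0 = mat 1"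
    using p0(1) unfolding C_def P_def W0_def by auto
  have PK: "P \<in> K" using PC1 unfolding C1_def symK_def by simp
  have invP: "invertible P" using PW invertible_right_inverse by blast
  have Ppd: "pd_mat P" using psd_inv_pd[OF _ invP] PC1 unfolding C1_def by simp
  have W0: "matrix_inv P = W0" using inv_unique[OF PW] .
  have fP: "precond_obj M P = g p0"
    unfolding precond_obj_def frob_sym[OF sM] g_def W0 using P_def W0_def by simp
  have fPc0: "precond_obj M P \<le> c0"
    using p0(2) IC unfolding fP by (force simp: g_def c0_def trace_mat1)
  have "precond_obj M P \<le> precond_obj M H" if H: "H \<in> K" "pd_mat H" for H
  proof (cases "precond_obj M H \<le> c0")
    case False then show ?thesis using fPc0 by simp
  next
    case True
    define Hi where "Hi = matrix_inv H"
    have psdHi: "psd_mat Hi" unfolding Hi_def using pd_psd[OF pd_inv[OF H(2)]] .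
    have t1: "0 \<le> trace (M ** Hi)" using psd_trace_nonneg[OF pd_psd[OF M] psdHi] .
    have t2: "0 \<le> trace H" using psd_trace_nonneg[OF pd_psd[OF H(2)] pd_psd[OF pd_mat1]] by simp
    have fH: "precond_obj M H = trace (M ** Hi) + trace H"
      unfolding precond_obj_def frob_sym[OF sM] Hi_def by simp
    have "H \<in> C1" unfolding C1_def symK_def using H pd_psd[OF H(2)] pd_sym[OF H(2)] True t1 fH by simp
    moreover have "Hi \<in> C2" using WC2[OF psdHi] True t2 fH by simp
    moreover have "H ** Hi = mat 1" unfolding Hi_def using inv_props(1)[OF pd_invertible[OF H(2)]] .
    ultimately have "(H, Hi) \<in> C" unfolding C_def using True t2 fH by simp
    then have "g p0 \<le> g (H, Hi)" using p0(2) by blast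
    then show ?thesis unfolding fP fH g_def by simp
  qed
  then show ?thesis using PK Ppd by blast
qed



lemma PH_props:
  fixes M :: "real^'n^'n"
  assumes K: "alg K" and HK: "\<H> = {A. psd_mat A} \<inter> K" and M: "pd_mat M"
  shows "P_H \<H> M \<in> K" "pd_mat (P_H \<H> M)"
    "\<forall>X\<in>symK K. trace (M ** X) = trace (P_H \<H> M ** P_H \<H> M ** X)"
proof -
  obtain P where P: "P \<in> K" "pd_mat P" "\<forall>H. H \<in> K \<longrightarrow> pd_mat H \<longrightarrow> precond_obj M P \<le> precond_obj M H"
    using exists_min[OF K M] by blast
  have st: "\<forall>X\<in>symK K. trace (M ** X) = trace (P ** P ** X)" using stat[OF K M P(1,2) P(3)] .
  have e: "P_H \<H> M = P" using P_H_eq[OF K HK M P(1,2) st] .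
  show "P_H \<H> M \<in> K" "pd_mat (P_H \<H> M)"
    "\<forall>X\<in>symK K. trace (M ** X) = trace (P_H \<H> M ** P_H \<H> M ** X)"
    unfolding e using P st by auto
qed

theorem lemmaA2:
  fixes \<H> :: "(real^'n^'n) set" and M :: "real^'n^'n"
  assumes "well_structured \<H>" and "pd_mat M"
  shows "(\<forall>H\<in>\<H>. frob M H = frob (P_H \<H> M ** P_H \<H> M) H) \<and>
         (\<forall>lam::real. lam \<ge> 0 \<longrightarrow>
            P_H \<H> (M + lam *\<^sub>R mat 1) ** P_H \<H> (M + lam *\<^sub>R mat 1)
              = P_H \<H> M ** P_H \<H> M + lam *\<^sub>R mat 1)"
proof -
  obtain K where K: "alg K" and HK: "\<H> = {A. psd_mat A} \<inter> K"
    using assms(1) unfolding well_structured_def alg_def by blast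
  define P where "P = P_H \<H> M"
  have PK: "P \<in> K" and Ppd: "pd_mat P" and Pst: "\<forall>X\<in>symK K. trace (M ** X) = trace (P ** P ** X)"
    using PH_props[OF K HK assms(2)] unfolding P_def by auto
  have sM: "transpose M = M" using pd_sym[OF assms(2)] .
  have sP: "transpose P = P" using pd_sym[OF Ppd] .
  have sPP: "transpose (P ** P) = P ** P" by (simp add: matrix_transpose_mul sP)
  have part1: "\<forall>H\<in>\<H>. frob M H = frob (P ** P) H"
  proof
    fix H assume "H \<in> \<H>"
    then have "H \<in> symK K" unfolding HK symK_def using psd_sym by auto
    then show "frob M H = frob (P ** P) H" unfolding frob_sym[OF sM] frob_sym[OF sPP] using Pst by simp
  qed
  have part2: "P_H \<H> (M + lam *\<^sub>R mat 1) ** P_H \<H> (M + lam *\<^sub>R mat 1) = P ** P + lam *\<^sub>R mat 1"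
    if lam: "lam \<ge> 0" for lam
  proof -
    define M' where "M' = M + lam *\<^sub>R mat 1"
    have M'pd: "pd_mat M'" unfolding pd_mat_def M'_def
    proof (intro conjI allI impI)
      show "transpose (M + lam *\<^sub>R mat 1) = M + lam *\<^sub>R mat 1" by (simp add: transpose_add transpose_scalar sM)
      fix x :: "real^'n" assume "x \<noteq> 0"
      then have "0 < x \<bullet> (M *v x)" using assms(2) unfolding pd_mat_def by blast
      moreover have "0 \<le> lam * (x \<bullet> x)" using lam by simp
      ultimately show "0 < x \<bullet> ((M + lam *\<^sub>R mat 1) *v x)" by (simp add: mv_add mv_scale inner_add_right)
    qed
    define R where "R = P_H \<H> M'"
    have RK: "R \<in> K" and Rpd: "pd_mat R" and Rst: "\<forall>X\<in>symK K. trace (M' ** X) = trace (R ** R ** X)"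
      using PH_props[OF K HK M'pd] unfolding R_def by auto
    have sR: "transpose R = R" using pd_sym[OF Rpd] .
    define X where "X = R ** R - P ** P - lam *\<^sub>R mat 1"
    have sX: "transpose X = X" unfolding X_def
      by (simp add: transpose_diff transpose_scalar matrix_transpose_mul sR sP)
    have XK: "X \<in> K" unfolding X_def
      using alg_diff[OF K alg_diff[OF K alg_mult[OF K RK RK] alg_mult[OF K PK PK]] alg_scale[OF K alg_one[OF K]]] .
    have XS: "X \<in> symK K" unfolding symK_def using XK sX by simp
    have "trace (M' ** X) = trace (M ** X) + lam * trace X"
      unfolding M'_def by (simp add: mm_add_r mm_scale_l trace_add trace_scale)
    then have "trace (R ** R ** X) = trace (P ** P ** X) + lam * trace X"
      using Rst Pst XS by simp
    then have "trace (X ** X) = 0" unfolding X_def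
      by (simp add: mm_diff_r mm_scale_l trace_sub trace_scale)
    then have "trace (transpose X ** (mat 1 ** X)) = 0" using sX by simp
    then have "X = 0" by (rule pd_quadtrace_nonneg(2)[OF pd_mat1])
    then show ?thesis unfolding X_def R_def M'_def by (simp add: algebra_simps)
  qed
  show ?thesis using part1 part2 unfolding P_def by blast
qed


end
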